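(* $R_5(VS)>180$ and $R_6(VS)>333$: there is a 5-coloring of $[180]$ and a 6-coloring of $[333]$ in each of which no two integers of the same color differ by a positive perfect square.
   Context: For $n\in\mathbb{N}$, $[n]=\{1,\dots,n\}$; a $c$-coloring of $[n]$ is a function $[n]\to[c]$. $R_c(VS)$ (the van der Square number) is the least positive integer $n$ such that every $c$-coloring of $[n]$ contains integers $a<b$ in $[n]$ of the same color with $b-a=x^2$ for some positive integer $x$. *)

theory Defs
  imports Main
begin

definition is_coloring :: "nat \<Rightarrow> nat \<Rightarrow> (nat \<Rightarrow> nat) \<Rightarrow> bool" where
  "is_coloring c n f \<longleftrightarrow> (\<forall>a\<in>{1..n}. f a \<in> {1..c})"

definition square_diff_free :: "nat \<Rightarrow> (nat \<Rightarrow> nat) \<Rightarrow> bool" where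
  "square_diff_free n f \<longleftrightarrow>
     (\<forall>a\<in>{1..n}. \<forall>b\<in>{1..n}. a < b \<longrightarrow> f a = f b \<longrightarrow> \<not> (\<exists>x::nat. x > 0 \<and> b - a = x ^ 2))"

end

theory Submission
  imports Defs
begin

definition chk :: "nat \<Rightarrow> nat \<Rightarrow> nat list \<Rightarrow> bool" where
  "chk m k xs \<longleftrightarrow> length xs < m * m \<and> list_all (\<lambda>c. 1 \<le> c \<and> c \<le> k) xs \<and>
     (\<forall>x\<in>set [1..<m]. list_all (\<lambda>(u,v). u \<noteq> v) (zip xs (drop (x^2) xs)))"

lemma chk_sound:
  assumes "chk m k xs" "n = length xs"
  shows "is_coloring k n (\<lambda>a. xs ! (a - 1)) \<and> square_diff_free n (\<lambda>a. xs ! (a - 1))"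
proof
  show "is_coloring k n (\<lambda>a. xs ! (a - 1))"
    using assms unfolding is_coloring_def chk_def list_all_length by auto
next
  show "square_diff_free n (\<lambda>a. xs ! (a - 1))"
    unfolding square_diff_free_def
  proof (intro ballI impI notI)
    fix a b assume a: "a \<in> {1..n}" and b: "b \<in> {1..n}" and ab: "a < b"
      and eq: "xs ! (a - 1) = xs ! (b - 1)" and ex: "\<exists>x::nat. x > 0 \<and> b - a = x ^ 2"
    then obtain x :: nat where x: "x > 0" "b - a = x^2" by blast
    have "x^2 < m^2" using assms x a b ab unfolding chk_def power2_eq_square by auto
    hence "x < m" by (rule power_less_imp_less_base) simp
    hence xn: "x \<in> set [1..<m]" using x by auto
    hence "list_all (\<lambda>(u,v). u \<noteq> v) (zip xs (drop (x^2) xs))"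
      using assms(1) unfolding chk_def by blast
    moreover have "a - 1 < length (zip xs (drop (x^2) xs))" using a b x assms(2) ab by auto
    ultimately have "(\<lambda>(u,v). u \<noteq> v) (zip xs (drop (x^2) xs) ! (a - 1))"
      by (simp only: list_all_length)
    moreover have "zip xs (drop (x^2) xs) ! (a - 1) = (xs ! (a - 1), xs ! (x^2 + (a - 1)))"
      using a b x assms(2) ab by (simp add: nth_zip)
    moreover have "x^2 + (a - 1) = b - 1" using a b x ab by simp
    ultimately show False using eq by simp
  qed
qed

definition cs5 :: "nat list" where "cs5 = [2,3,2,1,3,1,3,4,2,4,1,5,3,2,3,4,1,5,1,2,4,2,5,1,5,3,4,3,4,1,5,1,2,3,2,5,1,5,3,4,2,4,1,5,1,2,4,2,5,1,5,3,4,2,4,1,5,1,2,4,2,5,1,5,3,4,3,4,1,5,1,2,4,2,5,1,5,3,4,2,4,1,5,1,2,4,2,5,1,5,3,4,2,4,1,5,1,2,4,2,5,1,5,3,4,3,4,1,5,1,2,4,2,5,1,5,3,4,2,4,1,5,1,3,4,2,5,1,5,3,2,3,4,1,5,1,3,4,2,5,1,5,3,4,3,4,1,5,1,2,4,2,5,1,5,3,4,3,4,1,5,1,3,4,2,5,1,5,3,4,2,4,2,5,3,2,3,4,5,3]"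
definition cs6 :: "nat list" where "cs6 = [6,3,2,3,5,2,3,6,4,5,4,5,6,4,5,6,5,6,3,1,4,5,1,3,1,4,5,1,4,2,6,4,2,3,1,6,3,1,5,1,2,3,2,4,5,6,3,2,4,5,2,1,6,2,1,4,5,6,4,5,4,5,6,3,2,4,5,6,3,1,4,5,1,3,2,6,3,2,3,5,6,3,4,3,1,2,3,2,4,5,6,3,2,4,5,2,1,6,2,1,4,5,1,4,1,4,5,1,6,2,6,4,5,3,1,3,2,1,6,2,6,3,2,4,2,6,3,2,3,5,2,1,6,4,5,4,5,2,4,5,4,1,6,3,1,4,5,6,3,1,4,5,1,6,2,6,3,5,3,1,6,3,1,5,1,6,3,2,4,5,6,3,2,4,5,2,1,6,4,1,4,5,2,4,5,4,1,6,3,2,4,5,6,3,1,4,5,1,6,2,6,3,2,3,5,6,3,4,3,1,2,3,2,4,5,6,3,2,4,5,2,1,6,2,1,4,5,1,4,1,4,5,1,6,2,6,4,5,3,1,3,2,1,6,2,6,3,2,4,5,6,3,2,3,5,2,1,6,4,5,4,5,2,4,5,4,5,6,3,1,4,5,6,3,1,4,5,1,6,2,6,3,1,3,1,6,3,1,5,1,6,3,2,4,3,6,3,2,4,5,2,1,6,4,1,4,5,2,4,5,4,5,6,3,2,4,5,6,3,1,3,5,1,3,2,6,3,2,3,5,6,3,6]"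

lemma c5: "chk 14 5 cs5" unfolding cs5_def by code_simp
lemma c6: "chk 19 6 cs6" unfolding cs6_def by code_simp
lemma l5: "length cs5 = 180" unfolding cs5_def by simp
lemma l6: "length cs6 = 333" unfolding cs6_def by simp

theorem mainTheorem6:
  shows "(\<exists>f. is_coloring 5 180 f \<and> square_diff_free 180 f) \<and>
         (\<exists>f. is_coloring 6 333 f \<and> square_diff_free 333 f)"
  using chk_sound[OF c5 l5[symmetric]] chk_sound[OF c6 l6[symmetric]] by blast

end
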